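(* Let $AB$ be a non-signaling composite of probabilistic models $A$ and $B$, and let $\omega\in\Omega(AB)$ be steering for its $B$-marginal $\omega_2$. Then $\hat\omega(\mathbf{E}(A)_+)=\mathrm{Face}(\omega_2)$, where $\hat\omega:\mathbf{E}(A)\to\mathbf{V}(B)$ is the conditioning map $\hat\omega(a)(b)=\omega(a\otimes b)$ and $\mathrm{Face}(\omega_2)$ is the smallest face of the cone $\mathbf{V}(B)_+$ containing $\omega_2$.
   Context: Models are finite-dimensional and state-complete: each model $A$ has an ordered effect space $\mathbf{E}(A)$ (span of the evaluation functionals of its outcomes, positive cone $\mathbf{E}(A)_+$, order unit $u$), and $\mathbf{V}(A)=\mathbf{E}(A)^\ast$ ordered by the cone $\mathbf{V}(A)_+$ generated by the states; effects are $a$ with $0\le a\le u$, observables are finite sets of non-zero effects summing to $u$. A composite $AB$ is a model with an injective map $(x,y)\mapsto xy$ of outcomes such that products of tests are tests and products of states exist; it is non-signaling if every state has test-independent marginals and all conditional states lie in the component state spaces. In a non-signaling composite every state $\omega$ extends uniquely to a bilinear form $(a,b)\mapsto\omega(a\otimes b)$ on $\mathbf{E}(A)\times\mathbf{E}(B)$, with marginal $\omega_2(b)=\omega(u\otimes b)$. An ensemble for $\beta\in\Omega(B)$ is a finite family of un-normalized states $\beta_i\in\mathbf{V}(B)_+$ with $\sum_i\beta_i=\beta$. $\omega$ is steering for its $B$-marginal iff for every ensemble $\omega_2=\sum_i\beta_i$ there is an observable $\{a_i\}$ on $A$ with $\beta_i=\hat\omega(a_i)$ for all $i$. A face of a cone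 $K$ is a convex subcone $J\subseteq K$ such that $a+b\in J$ with $a,b\in K$ implies $a,b\in J$. *)

theory Defs
  imports Complex_Main
begin

text \<open>Probabilistic models: a test space (outcomes, tests) together with a set of
states (probability weights).  States are real-valued functions on outcomes,
vanishing off the outcome set.\<close>

record 'x model =
  outcomes :: "'x set"
  tests :: "'x set set"
  states :: "('x \<Rightarrow> real) set"

definition prob_weight :: "'x model \<Rightarrow> ('x \<Rightarrow> real) \<Rightarrow> bool" where
  "prob_weight A \<alpha> \<longleftrightarrow>
     (\<forall>x. x \<notin> outcomes A \<longrightarrow> \<alpha> x = 0) \<and>
     (\<forall>x \<in> outcomes A. 0 \<le> \<alpha> x) \<and>
     (\<forall>E \<in> tests A. (\<Sum>x\<in>E. \<alpha> x) = 1)"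

definition lin_span :: "('x \<Rightarrow> real) set \<Rightarrow> ('x \<Rightarrow> real) set" where
  "lin_span F = {(\<lambda>x. \<Sum>f\<in>S. t f * f x) | S t. finite S \<and> S \<subseteq> F}"

definition Vsp :: "'x model \<Rightarrow> ('x \<Rightarrow> real) set" where
  "Vsp A = lin_span (states A)"

definition Vpos :: "'x model \<Rightarrow> ('x \<Rightarrow> real) set" where
  "Vpos A = {(\<lambda>x. \<Sum>f\<in>S. t f * f x) | S t. finite S \<and> S \<subseteq> states A \<and> (\<forall>f\<in>S. 0 \<le> t f)}"

text \<open>Effects are linear functionals on V(A), represented as functions on V(A)
(extended by 0 outside V(A)); E(A) is spanned by the evaluation functionals
of outcomes.\<close>
definition eff :: "'x model \<Rightarrow> 'x set \<Rightarrow> ('x \<Rightarrow> real) \<Rightarrow> (('x \<Rightarrow> real) \<Rightarrow> real)" where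
  "eff A S c = (\<lambda>\<beta>. if \<beta> \<in> Vsp A then (\<Sum>x\<in>S. c x * \<beta> x) else 0)"

definition Esp :: "'x model \<Rightarrow> (('x \<Rightarrow> real) \<Rightarrow> real) set" where
  "Esp A = {eff A S c | S c. finite S \<and> S \<subseteq> outcomes A}"

definition Epos :: "'x model \<Rightarrow> (('x \<Rightarrow> real) \<Rightarrow> real) set" where
  "Epos A = {a \<in> Esp A. \<forall>\<alpha> \<in> states A. 0 \<le> a \<alpha>}"

text \<open>The order unit: sum of the evaluation functionals over any test.\<close>
definition unit_eff :: "'x model \<Rightarrow> (('x \<Rightarrow> real) \<Rightarrow> real)" where
  "unit_eff A = eff A (SOME E. E \<in> tests A) (\<lambda>_. 1)"

definition is_effect :: "'x model \<Rightarrow> (('x \<Rightarrow> real) \<Rightarrow> real) \<Rightarrow> bool" where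
  "is_effect A a \<longleftrightarrow> a \<in> Epos A \<and> (\<lambda>\<beta>. unit_eff A \<beta> - a \<beta>) \<in> Epos A"

definition observable :: "'x model \<Rightarrow> nat \<Rightarrow> (nat \<Rightarrow> (('x \<Rightarrow> real) \<Rightarrow> real)) \<Rightarrow> bool" where
  "observable A n a \<longleftrightarrow>
     (\<forall>i<n. is_effect A (a i) \<and> a i \<noteq> (\<lambda>_. 0)) \<and>
     (\<forall>\<beta>. (\<Sum>i<n. a i \<beta>) = unit_eff A \<beta>)"

definition state_complete :: "'x model \<Rightarrow> bool" where
  "state_complete A \<longleftrightarrow> (\<forall>\<beta> \<in> Vsp A. prob_weight A \<beta> \<longrightarrow> \<beta> \<in> states A)"

definition finite_dim :: "'x model \<Rightarrow> bool" where
  "finite_dim A \<longleftrightarrow> (\<exists>F. finite F \<and> F \<subseteq> states A \<and> states A \<subseteq> lin_span F)"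

definition is_model :: "'x model \<Rightarrow> bool" where
  "is_model A \<longleftrightarrow>
     tests A \<noteq> {} \<and> (\<forall>E \<in> tests A. E \<noteq> {} \<and> finite E) \<and>
     outcomes A = \<Union>(tests A) \<and>
     states A \<noteq> {} \<and> (\<forall>\<alpha> \<in> states A. prob_weight A \<alpha>) \<and>
     finite_dim A \<and> state_complete A"

text \<open>Composite AB with product map p : (x,y) \<mapsto> xy.\<close>
definition composite :: "'x model \<Rightarrow> 'y model \<Rightarrow> 'w model \<Rightarrow> ('x \<Rightarrow> 'y \<Rightarrow> 'w) \<Rightarrow> bool" where
  "composite A B AB p \<longleftrightarrow>
     is_model A \<and> is_model B \<and> is_model AB \<and>
     inj_on (\<lambda>(x, y). p x y) (outcomes A \<times> outcomes B) \<and>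
     (\<forall>x \<in> outcomes A. \<forall>y \<in> outcomes B. p x y \<in> outcomes AB) \<and>
     (\<forall>E \<in> tests A. \<forall>F \<in> tests B. {p x y | x y. x \<in> E \<and> y \<in> F} \<in> tests AB) \<and>
     (\<forall>\<alpha> \<in> states A. \<forall>\<beta> \<in> states B. \<exists>\<gamma> \<in> states AB.
        \<forall>x \<in> outcomes A. \<forall>y \<in> outcomes B. \<gamma> (p x y) = \<alpha> x * \<beta> y)"

text \<open>Marginals (computed with some test of the other factor).\<close>
definition marg1 :: "'x model \<Rightarrow> 'y model \<Rightarrow> ('x \<Rightarrow> 'y \<Rightarrow> 'w) \<Rightarrow> ('w \<Rightarrow> real) \<Rightarrow> ('x \<Rightarrow> real)" where
  "marg1 A B p \<omega> = (\<lambda>x. if x \<in> outcomes A then (\<Sum>y\<in>(SOME F. F \<in> tests B). \<omega> (p x y)) else 0)"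

definition marg2 :: "'x model \<Rightarrow> 'y model \<Rightarrow> ('x \<Rightarrow> 'y \<Rightarrow> 'w) \<Rightarrow> ('w \<Rightarrow> real) \<Rightarrow> ('y \<Rightarrow> real)" where
  "marg2 A B p \<omega> = (\<lambda>y. if y \<in> outcomes B then (\<Sum>x\<in>(SOME E. E \<in> tests A). \<omega> (p x y)) else 0)"

definition non_signaling :: "'x model \<Rightarrow> 'y model \<Rightarrow> 'w model \<Rightarrow> ('x \<Rightarrow> 'y \<Rightarrow> 'w) \<Rightarrow> bool" where
  "non_signaling A B AB p \<longleftrightarrow>
     composite A B AB p \<and>
     (\<forall>\<omega> \<in> states AB.
        (\<forall>E \<in> tests A. \<forall>E' \<in> tests A. \<forall>y \<in> outcomes B.
            (\<Sum>x\<in>E. \<omega> (p x y)) = (\<Sum>x\<in>E'. \<omega> (p x y))) \<and>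
        (\<forall>F \<in> tests B. \<forall>F' \<in> tests B. \<forall>x \<in> outcomes A.
            (\<Sum>y\<in>F. \<omega> (p x y)) = (\<Sum>y\<in>F'. \<omega> (p x y))) \<and>
        (\<forall>x \<in> outcomes A. marg1 A B p \<omega> x > 0 \<longrightarrow>
            (\<lambda>y. if y \<in> outcomes B then \<omega> (p x y) / marg1 A B p \<omega> x else 0) \<in> states B) \<and>
        (\<forall>y \<in> outcomes B. marg2 A B p \<omega> y > 0 \<longrightarrow>
            (\<lambda>x. if x \<in> outcomes A then \<omega> (p x y) / marg2 A B p \<omega> y else 0) \<in> states A))"

text \<open>Conditioning map \<omega>^ : E(A) \<rightarrow> V(B), \<omega>^(a)(y) = \<omega>(a \<otimes> y), via the
bilinear extension \<omega>(a \<otimes> y) = \<Sum> c_x \<omega>(xy) for a = \<Sum> c_x x^.\<close>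
definition cond_map :: "'x model \<Rightarrow> 'y model \<Rightarrow> ('x \<Rightarrow> 'y \<Rightarrow> 'w) \<Rightarrow> ('w \<Rightarrow> real)
    \<Rightarrow> (('x \<Rightarrow> real) \<Rightarrow> real) \<Rightarrow> ('y \<Rightarrow> real)" where
  "cond_map A B p \<omega> a =
     (let (S, c) = (SOME (S, c). finite S \<and> S \<subseteq> outcomes A \<and> a = eff A S c)
      in (\<lambda>y. if y \<in> outcomes B then (\<Sum>x\<in>S. c x * \<omega> (p x y)) else 0))"

definition steering :: "'x model \<Rightarrow> 'y model \<Rightarrow> ('x \<Rightarrow> 'y \<Rightarrow> 'w) \<Rightarrow> ('w \<Rightarrow> real) \<Rightarrow> bool" where
  "steering A B p \<omega> \<longleftrightarrow>
     (\<forall>n \<beta>. (\<forall>i<n. \<beta> i \<in> Vpos B \<and> \<beta> i \<noteq> (\<lambda>_. 0)) \<and>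
            (\<forall>y. (\<Sum>i<n. \<beta> i y) = marg2 A B p \<omega> y) \<longrightarrow>
        (\<exists>a. observable A n a \<and> (\<forall>i<n. \<beta> i = cond_map A B p \<omega> (a i))))"

definition is_face :: "('y \<Rightarrow> real) set \<Rightarrow> ('y \<Rightarrow> real) set \<Rightarrow> bool" where
  "is_face K J \<longleftrightarrow>
     J \<subseteq> K \<and> J \<noteq> {} \<and>
     (\<forall>a\<in>J. \<forall>b\<in>J. (\<lambda>y. a y + b y) \<in> J) \<and>
     (\<forall>a\<in>J. \<forall>t::real. 0 \<le> t \<longrightarrow> (\<lambda>y. t * a y) \<in> J) \<and>
     (\<forall>a\<in>K. \<forall>b\<in>K. (\<lambda>y. a y + b y) \<in> J \<longrightarrow> a \<in> J \<and> b \<in> J)"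

definition Face :: "('y \<Rightarrow> real) set \<Rightarrow> ('y \<Rightarrow> real) \<Rightarrow> ('y \<Rightarrow> real) set" where
  "Face K v = \<Inter>{J. is_face K J \<and> v \<in> J}"

end

theory Submission
  imports Defs
begin


lemma lin_span_zero: "(\<lambda>x. 0) \<in> lin_span F"
proof -
  have "(\<lambda>x. 0::real) = (\<lambda>x. \<Sum>f\<in>{}. (\<lambda>_. 0) f * f x)" by simp
  then show ?thesis unfolding lin_span_def mem_Collect_eq
    by (intro exI[where x="{}"] exI[where x="\<lambda>_. 0::real"]) simp
qed

lemma lin_span_single: "f \<in> F \<Longrightarrow> (\<lambda>x. r * f x) \<in> lin_span F"
proof -
  have "(\<lambda>x. r * f x) = (\<lambda>x. \<Sum>g\<in>{f}. (\<lambda>_. r) g * g x)" by simp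
  moreover assume "f \<in> F"
  ultimately show ?thesis unfolding lin_span_def mem_Collect_eq
    by (intro exI[where x="{f}"] exI[where x="\<lambda>_. r"]) simp
qed

lemma sum_restrict_gen:
  fixes t :: "'a \<Rightarrow> real"
  assumes "finite U" "S \<subseteq> U"
  shows "(\<Sum>f\<in>S. t f * g f) = (\<Sum>f\<in>U. (if f\<in>S then t f else 0) * g f)"
proof -
  have "(\<Sum>f\<in>U. (if f\<in>S then t f else 0) * g f) = (\<Sum>f\<in>U. if f\<in>S then t f * g f else 0)"
    by (rule sum.cong) simp_all
  also have "\<dots> = (\<Sum>f\<in>U \<inter> S. t f * g f)" using assms(1) by (simp add: sum.inter_restrict)
  also have "U \<inter> S = S" using assms(2) by auto
  finally show ?thesis by simp
qed

lemma lin_span_lc: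
  assumes "f \<in> lin_span F" "g \<in> lin_span F"
  shows "(\<lambda>x. r * f x + s * g x) \<in> lin_span F"
proof -
  obtain S t where S: "finite S" "S \<subseteq> F" "f = (\<lambda>x. \<Sum>h\<in>S. t h * h x)"
    using assms(1) unfolding lin_span_def by blast
  obtain S' t' where S': "finite S'" "S' \<subseteq> F" "g = (\<lambda>x. \<Sum>h\<in>S'. t' h * h x)"
    using assms(2) unfolding lin_span_def by blast
  define T where "T h = r * (if h\<in>S then t h else 0) + s * (if h\<in>S' then t' h else 0)" for h
  have "(\<lambda>x. r * f x + s * g x) = (\<lambda>x. \<Sum>h\<in>S\<union>S'. T h * h x)"
  proof
    fix x
    have a: "f x = (\<Sum>h\<in>S\<union>S'. (if h\<in>S then t h else 0) * h x)"
      using S sum_restrict_gen[of "S\<union>S'" S t "\<lambda>h. h x"] S' by auto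
    have b: "g x = (\<Sum>h\<in>S\<union>S'. (if h\<in>S' then t' h else 0) * h x)"
      using S' sum_restrict_gen[of "S\<union>S'" S' t' "\<lambda>h. h x"] S by auto
    show "r * f x + s * g x = (\<Sum>h\<in>S\<union>S'. T h * h x)"
      unfolding a b T_def by (simp add: sum_distrib_left sum.distrib[symmetric] algebra_simps)
  qed
  then show ?thesis unfolding lin_span_def using S S' by blast
qed

lemma lin_span_sum:
  assumes "finite S" "\<And>i. i \<in> S \<Longrightarrow> g i \<in> lin_span F"
  shows "(\<lambda>y. \<Sum>i\<in>S. g i y) \<in> lin_span F"
  using assms
proof (induction S rule: finite_induct)
  case empty then show ?case using lin_span_zero by simp
next
  case (insert i S)
  have "(\<lambda>y. 1 * g i y + 1 * (\<Sum>j\<in>S. g j y)) \<in> lin_span F"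
    using insert by (intro lin_span_lc[where f="g i" and g="\<lambda>y. \<Sum>j\<in>S. g j y"]) auto
  then show ?case using insert by simp
qed

lemma states_Vsp: "\<alpha> \<in> states A \<Longrightarrow> \<alpha> \<in> Vsp A"
  unfolding Vsp_def using lin_span_single[of \<alpha> "states A" 1] by simp

lemma Vpos_D:
  assumes "is_model B" "\<beta> \<in> Vpos B"
  shows "\<beta> \<in> Vsp B" "\<And>y. y \<notin> outcomes B \<Longrightarrow> \<beta> y = 0" "\<And>y. 0 \<le> \<beta> y"
proof -
  obtain S t where S: "finite S" "S \<subseteq> states B" "\<forall>f\<in>S. 0 \<le> t f" "\<beta> = (\<lambda>x. \<Sum>f\<in>S. t f * f x)"
    using assms(2) unfolding Vpos_def by blast
  have pw: "\<And>f. f \<in> S \<Longrightarrow> prob_weight B f" using S assms(1) unfolding is_model_def by blast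
  show "\<beta> \<in> Vsp B" unfolding Vsp_def lin_span_def using S by blast
  show "\<And>y. y \<notin> outcomes B \<Longrightarrow> \<beta> y = 0" using S pw unfolding prob_weight_def by (simp add: sum.neutral)
  show "\<And>y. 0 \<le> \<beta> y"
  proof -
    fix y
    have "\<And>f. f \<in> S \<Longrightarrow> 0 \<le> f y" using pw unfolding prob_weight_def by (cases "y \<in> outcomes B") force+
    then show "0 \<le> \<beta> y" using S by (auto intro!: sum_nonneg)
  qed
qed

lemma Vpos_zero: "(\<lambda>x. 0) \<in> Vpos B"
proof -
  have "(\<lambda>x. 0::real) = (\<lambda>x. \<Sum>f\<in>{}. (\<lambda>_. 0) f * f x)" by simp
  then show ?thesis unfolding Vpos_def mem_Collect_eq
    by (intro exI[where x="{}"] exI[where x="\<lambda>_. 0::real"]) simp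
qed

lemma Vpos_I:
  assumes mB: "is_model B" and v: "\<beta> \<in> Vsp B" and nn: "\<forall>y\<in>outcomes B. 0 \<le> \<beta> y"
  shows "\<beta> \<in> Vpos B"
proof -
  obtain S t where S: "finite S" "S \<subseteq> states B" "\<beta> = (\<lambda>x. \<Sum>f\<in>S. t f * f x)"
    using v unfolding Vsp_def lin_span_def by blast
  have pw: "\<And>f. f \<in> S \<Longrightarrow> prob_weight B f" using S mB unfolding is_model_def by blast
  have out: "\<And>y. y \<notin> outcomes B \<Longrightarrow> \<beta> y = 0" using S pw unfolding prob_weight_def by (simp add: sum.neutral)
  define T where "T = (\<Sum>f\<in>S. t f)"
  have tsum: "(\<Sum>y\<in>F. \<beta> y) = T" if F: "F \<in> tests B" for F
  proof -
    have "(\<Sum>y\<in>F. \<beta> y) = (\<Sum>f\<in>S. t f * (\<Sum>y\<in>F. f y))"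
      unfolding S(3) by (simp add: sum_distrib_left sum.swap[of _ F S])
    also have "\<dots> = T" unfolding T_def using pw F unfolding prob_weight_def by simp
    finally show ?thesis .
  qed
  have testsB: "tests B \<noteq> {}" "\<And>F. F \<in> tests B \<Longrightarrow> finite F" "outcomes B = \<Union>(tests B)"
    using mB unfolding is_model_def by auto
  obtain F0 where F0: "F0 \<in> tests B" using testsB by blast
  have "0 \<le> T" using tsum[OF F0] nn testsB(3) F0 by (metis Union_upper subsetD sum_nonneg)
  show ?thesis
  proof (cases "T = 0")
    case True
    have "\<beta> y = 0" for y
    proof (cases "y \<in> outcomes B")
      case False then show ?thesis using out by simp
    next
      case True
      then obtain F where F: "F \<in> tests B" "y \<in> F" using testsB(3) by blast
      have sub: "F \<subseteq> outcomes B" using F testsB(3) by blast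
      have "(\<Sum>y\<in>F. \<beta> y) = 0" using tsum[OF F(1)] \<open>T = 0\<close> by simp
      then have "\<forall>y\<in>F. \<beta> y = 0" using sum_nonneg_eq_0_iff[of F \<beta>] testsB(2)[OF F(1)] nn sub by blast
      then show ?thesis using F by blast
    qed
    then have "\<beta> = (\<lambda>x. 0)" by auto
    then show ?thesis using Vpos_zero by simp
  next
    case False
    then have Tp: "T > 0" using \<open>0 \<le> T\<close> by simp
    define \<gamma> where "\<gamma> = (\<lambda>x. \<beta> x / T)"
    have "(\<lambda>x. (1/T) * \<beta> x + 0 * \<beta> x) \<in> lin_span (states B)"
      using v unfolding Vsp_def by (intro lin_span_lc)
    then have gv: "\<gamma> \<in> Vsp B" unfolding \<gamma>_def Vsp_def by simp
    have "prob_weight B \<gamma>" unfolding prob_weight_def \<gamma>_def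
    proof (intro conjI ballI allI impI)
      fix x assume "x \<notin> outcomes B" then show "\<beta> x / T = 0" using out by simp
    next
      fix x assume "x \<in> outcomes B" then show "0 \<le> \<beta> x / T" using nn Tp by simp
    next
      fix E assume "E \<in> tests B"
      then show "(\<Sum>x\<in>E. \<beta> x / T) = 1" using tsum Tp by (simp add: sum_divide_distrib[symmetric])
    qed
    then have gs: "\<gamma> \<in> states B" using gv mB unfolding is_model_def state_complete_def by blast
    have "\<beta> = (\<lambda>x. \<Sum>f\<in>{\<gamma>}. (\<lambda>_. T) f * f x)" unfolding \<gamma>_def using Tp by auto
    then show ?thesis unfolding Vpos_def mem_Collect_eq using gs Tp
      by (intro exI[where x="{\<gamma>}"] exI[where x="\<lambda>_. T"]) auto
  qed
qed



locale setting =
  fixes A :: "'x model" and B :: "'y model" and AB :: "'w model"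
    and p :: "'x \<Rightarrow> 'y \<Rightarrow> 'w" and \<omega> :: "'w \<Rightarrow> real"
  assumes ns: "non_signaling A B AB p" and om: "\<omega> \<in> states AB"
begin

lemma comp: "composite A B AB p" using ns unfolding non_signaling_def by blast
lemma mA: "is_model A" using comp unfolding composite_def by blast
lemma mB: "is_model B" using comp unfolding composite_def by blast
lemma mAB: "is_model AB" using comp unfolding composite_def by blast

lemma pwAB: "prob_weight AB \<omega>" using om mAB unfolding is_model_def by blast

lemma pos: "x \<in> outcomes A \<Longrightarrow> y \<in> outcomes B \<Longrightarrow> 0 \<le> \<omega> (p x y)"
proof -
  assume "x \<in> outcomes A" "y \<in> outcomes B"
  then have "p x y \<in> outcomes AB" using comp unfolding composite_def by blast
  then show ?thesis using pwAB unfolding prob_weight_def by blast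
qed

lemma NS: "(\<forall>E \<in> tests A. \<forall>E' \<in> tests A. \<forall>y \<in> outcomes B.
            (\<Sum>x\<in>E. \<omega> (p x y)) = (\<Sum>x\<in>E'. \<omega> (p x y))) \<and>
        (\<forall>F \<in> tests B. \<forall>F' \<in> tests B. \<forall>x \<in> outcomes A.
            (\<Sum>y\<in>F. \<omega> (p x y)) = (\<Sum>y\<in>F'. \<omega> (p x y))) \<and>
        (\<forall>x \<in> outcomes A. marg1 A B p \<omega> x > 0 \<longrightarrow>
            (\<lambda>y. if y \<in> outcomes B then \<omega> (p x y) / marg1 A B p \<omega> x else 0) \<in> states B) \<and>
        (\<forall>y \<in> outcomes B. marg2 A B p \<omega> y > 0 \<longrightarrow>
            (\<lambda>x. if x \<in> outcomes A then \<omega> (p x y) / marg2 A B p \<omega> y else 0) \<in> states A)"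
  using bspec[OF ns[unfolded non_signaling_def, THEN conjunct2] om] .

definition "E0 = (SOME E. E \<in> tests A)"
definition "F0 = (SOME F. F \<in> tests B)"
abbreviation "m2 \<equiv> marg2 A B p \<omega>"
abbreviation "m1 \<equiv> marg1 A B p \<omega>"

lemma E0: "E0 \<in> tests A" unfolding E0_def using mA unfolding is_model_def by (metis ex_in_conv someI)
lemma F0: "F0 \<in> tests B" unfolding F0_def using mB unfolding is_model_def by (metis ex_in_conv someI)

lemma testsA: "\<And>E. E \<in> tests A \<Longrightarrow> finite E" "outcomes A = \<Union>(tests A)"
  using mA unfolding is_model_def by auto
lemma testsB: "\<And>F. F \<in> tests B \<Longrightarrow> finite F" "outcomes B = \<Union>(tests B)"
  using mB unfolding is_model_def by auto

lemma m2_eq: "y \<in> outcomes B \<Longrightarrow> E \<in> tests A \<Longrightarrow> (\<Sum>x\<in>E. \<omega> (p x y)) = m2 y"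
proof -
  assume y: "y \<in> outcomes B" and E: "E \<in> tests A"
  have "(\<Sum>x\<in>E. \<omega> (p x y)) = (\<Sum>x\<in>E0. \<omega> (p x y))" using NS E E0 y by blast
  then show ?thesis unfolding marg2_def E0_def using y by simp
qed

lemma m1_eq: "x \<in> outcomes A \<Longrightarrow> F \<in> tests B \<Longrightarrow> (\<Sum>y\<in>F. \<omega> (p x y)) = m1 x"
proof -
  assume x: "x \<in> outcomes A" and F: "F \<in> tests B"
  have "(\<Sum>y\<in>F. \<omega> (p x y)) = (\<Sum>y\<in>F0. \<omega> (p x y))" using NS F F0 x by blast
  then show ?thesis unfolding marg1_def F0_def using x by simp
qed

lemma le_m2: assumes "x \<in> outcomes A" "y \<in> outcomes B" shows "\<omega> (p x y) \<le> m2 y"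
proof -
  obtain E where E: "E \<in> tests A" "x \<in> E" using assms testsA by blast
  have sub: "E \<subseteq> outcomes A" using E testsA by blast
  have "\<omega> (p x y) \<le> (\<Sum>x\<in>E. \<omega> (p x y))"
    using E testsA(1)[OF E(1)] by (intro member_le_sum pos) (use sub assms in auto)
  then show ?thesis using m2_eq[OF assms(2) E(1)] by simp
qed

lemma le_m1: assumes "x \<in> outcomes A" "y \<in> outcomes B" shows "\<omega> (p x y) \<le> m1 x"
proof -
  obtain F where F: "F \<in> tests B" "y \<in> F" using assms testsB by blast
  have sub: "F \<subseteq> outcomes B" using F testsB by blast
  have "\<omega> (p x y) \<le> (\<Sum>y\<in>F. \<omega> (p x y))"
    using F testsB(1)[OF F(1)] by (intro member_le_sum pos) (use sub assms in auto)
  then show ?thesis using m1_eq[OF assms(1) F(1)] by simp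
qed

lemma m2_out: "y \<notin> outcomes B \<Longrightarrow> m2 y = 0" unfolding marg2_def by simp

lemma m2_nn: "0 \<le> m2 y"
proof (cases "y \<in> outcomes B")
  case True
  obtain x where "x \<in> E0" using E0 mA unfolding is_model_def by blast
  then have "x \<in> outcomes A" using E0 testsA by blast
  then show ?thesis using pos le_m2 True by (meson order.trans)
qed (simp add: m2_out)

lemma cy_state: "y \<in> outcomes B \<Longrightarrow> m2 y > 0 \<Longrightarrow>
   (\<lambda>x. if x \<in> outcomes A then \<omega> (p x y) / m2 y else 0) \<in> states A"
  using NS by blast

lemma cx_state: "x \<in> outcomes A \<Longrightarrow> m1 x > 0 \<Longrightarrow>
   (\<lambda>y. if y \<in> outcomes B then \<omega> (p x y) / m1 x else 0) \<in> states B"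
  using NS by blast

definition cm :: "'x set \<Rightarrow> ('x \<Rightarrow> real) \<Rightarrow> 'y \<Rightarrow> real" where
  "cm S c = (\<lambda>y. if y \<in> outcomes B then (\<Sum>x\<in>S. c x * \<omega> (p x y)) else 0)"

lemma cm_welldef:
  assumes S: "finite S" "S \<subseteq> outcomes A" and S': "finite S'" "S' \<subseteq> outcomes A"
    and eq: "eff A S c = eff A S' c'"
  shows "cm S c = cm S' c'"
proof
  fix y
  show "cm S c y = cm S' c' y"
  proof (cases "y \<in> outcomes B")
    case False then show ?thesis unfolding cm_def by simp
  next
    case y: True
    show ?thesis
    proof (cases "m2 y = 0")
      case True
      then have "\<And>x. x \<in> outcomes A \<Longrightarrow> \<omega> (p x y) = 0" using pos le_m2 y by (metis order.antisym)
      then have z: "(\<Sum>x\<in>T. d x * \<omega> (p x y)) = 0" if "T \<subseteq> outcomes A" for T d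
        using that by (intro sum.neutral) auto
      show ?thesis unfolding cm_def using z[OF S(2)] z[OF S'(2)] by simp
    next
      case False
      then have mp: "m2 y > 0" using m2_nn by (simp add: order_less_le)
      define cy where "cy = (\<lambda>x. if x \<in> outcomes A then \<omega> (p x y) / m2 y else 0)"
      have cs: "cy \<in> Vsp A" using cy_state[OF y mp] states_Vsp unfolding cy_def by blast
      have "eff A S c cy = eff A S' c' cy" using eq by simp
      then have e: "(\<Sum>x\<in>S. c x * cy x) = (\<Sum>x\<in>S'. c' x * cy x)" using cs unfolding eff_def by simp
      have r: "(\<Sum>x\<in>T. d x * \<omega> (p x y)) = m2 y * (\<Sum>x\<in>T. d x * cy x)" if "T \<subseteq> outcomes A" for T d
        unfolding sum_distrib_left using that mp unfolding cy_def
        by (intro sum.cong) (auto simp: field_simps)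
      show ?thesis unfolding cm_def using y r[OF S(2)] r[OF S'(2)] e by simp
    qed
  qed
qed

lemma cond_map_eff:
  assumes S: "finite S" "S \<subseteq> outcomes A"
  shows "cond_map A B p \<omega> (eff A S c) = cm S c"
proof -
  let ?P = "\<lambda>(S', c'). finite S' \<and> S' \<subseteq> outcomes A \<and> eff A S c = eff A S' c'"
  obtain S' c' where q: "(SOME q. ?P q) = (S', c')" by (cases "SOME q. ?P q") auto
  have "?P (S, c)" using S by simp
  then have "?P (SOME q. ?P q)" by (rule someI)
  then have P: "?P (S', c')" using q by simp
  have "cond_map A B p \<omega> (eff A S c) = cm S' c'"
    unfolding cond_map_def cm_def q by simp
  also have "\<dots> = cm S c" using cm_welldef[OF S] P by auto
  finally show ?thesis .
qed


lemma E0fin: "finite E0" "E0 \<subseteq> outcomes A" using E0 testsA by auto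

lemma unit_E0: "unit_eff A = eff A E0 (\<lambda>_. 1)" unfolding unit_eff_def E0_def ..

lemma m1_nn_cases: "x \<in> outcomes A \<Longrightarrow> y \<in> outcomes B \<Longrightarrow> \<not> m1 x > 0 \<Longrightarrow> \<omega> (p x y) = 0"
  using pos le_m1 by (metis order.antisym not_less order.trans)

lemma cm_Vsp:
  assumes S: "finite S" "S \<subseteq> outcomes A"
  shows "cm S c \<in> Vsp B"
proof -
  define cx where "cx x = (\<lambda>y. if y \<in> outcomes B then \<omega> (p x y) / m1 x else 0)" for x
  define g where "g x = (if m1 x > 0 then (\<lambda>y. (c x * m1 x) * cx x y) else (\<lambda>y. 0))" for x
  have gl: "g x \<in> lin_span (states B)" if "x \<in> S" for x
  proof (cases "m1 x > 0")
    case True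
    then have "cx x \<in> states B" using cx_state that S unfolding cx_def by blast
    then show ?thesis unfolding g_def using True by (simp add: lin_span_single)
  next
    case False then show ?thesis unfolding g_def using lin_span_zero by simp
  qed
  have eq: "cm S c = (\<lambda>y. \<Sum>x\<in>S. g x y)"
  proof
    fix y
    show "cm S c y = (\<Sum>x\<in>S. g x y)"
    proof (cases "y \<in> outcomes B")
      case True
      have "c x * \<omega> (p x y) = g x y" if "x \<in> S" for x
      proof (cases "m1 x > 0")
        case True then show ?thesis unfolding g_def cx_def using \<open>y \<in> outcomes B\<close> by simp
      next
        case False then show ?thesis unfolding g_def using m1_nn_cases that S \<open>y \<in> outcomes B\<close> by auto
      qed
      then show ?thesis unfolding cm_def using True by (simp cong: sum.cong)
    next
      case False
      then have "\<And>x. g x y = 0" unfolding g_def cx_def by simp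
      then show ?thesis unfolding cm_def using False by simp
    qed
  qed
  show ?thesis unfolding eq Vsp_def using S gl by (intro lin_span_sum) auto
qed

lemma cm_cy:
  assumes y: "y \<in> outcomes B" "m2 y > 0" and T: "T \<subseteq> outcomes A"
  shows "(\<Sum>x\<in>T. d x * \<omega> (p x y)) = m2 y * (\<Sum>x\<in>T. d x * (\<lambda>x. if x \<in> outcomes A then \<omega> (p x y) / m2 y else 0) x)"
  unfolding sum_distrib_left using T y
  by (intro sum.cong) (auto simp: field_simps)

lemma cm_z:
  assumes y: "y \<in> outcomes B" "m2 y = 0" and T: "T \<subseteq> outcomes A"
  shows "(\<Sum>x\<in>T. d x * \<omega> (p x y)) = 0"
proof -
  have "\<And>x. x \<in> outcomes A \<Longrightarrow> \<omega> (p x y) = 0" using pos le_m2 y by (metis order.antisym)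
  then show ?thesis using T by (intro sum.neutral) auto
qed

lemma cm_nonneg:
  assumes S: "finite S" "S \<subseteq> outcomes A" and nn: "\<forall>\<alpha>\<in>states A. 0 \<le> eff A S c \<alpha>"
  shows "0 \<le> cm S c y"
proof (cases "y \<in> outcomes B")
  case False then show ?thesis unfolding cm_def by simp
next
  case y: True
  show ?thesis
  proof (cases "m2 y = 0")
    case True then show ?thesis unfolding cm_def using cm_z[OF y True S(2)] y by simp
  next
    case False
    then have mp: "m2 y > 0" using m2_nn by (simp add: order_less_le)
    define cy where "cy = (\<lambda>x. if x \<in> outcomes A then \<omega> (p x y) / m2 y else 0)"
    have cs: "cy \<in> states A" using cy_state[OF y mp] unfolding cy_def by blast
    then have "0 \<le> eff A S c cy" using nn by blast
    then have "0 \<le> (\<Sum>x\<in>S. c x * cy x)" using states_Vsp[OF cs] unfolding eff_def by simp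
    then show ?thesis unfolding cm_def using y cm_cy[OF y mp S(2), of c] mp unfolding cy_def by simp
  qed
qed

lemma cm_bound:
  assumes S: "finite S" "S \<subseteq> outcomes A"
  shows "cm S c y \<le> (\<Sum>x\<in>S. \<bar>c x\<bar>) * m2 y"
proof (cases "y \<in> outcomes B")
  case False then show ?thesis unfolding cm_def using m2_out by simp
next
  case y: True
  have "(\<Sum>x\<in>S. c x * \<omega> (p x y)) \<le> (\<Sum>x\<in>S. \<bar>c x\<bar> * m2 y)"
  proof (rule sum_mono)
    fix x assume x: "x \<in> S"
    then have xo: "x \<in> outcomes A" using S by blast
    have "c x * \<omega> (p x y) \<le> \<bar>c x\<bar> * \<omega> (p x y)"
      using pos[OF xo y] by (intro mult_right_mono) auto
    also have "\<dots> \<le> \<bar>c x\<bar> * m2 y" using le_m2[OF xo y] by (intro mult_left_mono) auto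
    finally show "c x * \<omega> (p x y) \<le> \<bar>c x\<bar> * m2 y" .
  qed
  then show ?thesis unfolding cm_def using y by (simp add: sum_distrib_right)
qed

lemma cm_E0: "cm E0 (\<lambda>_. r) = (\<lambda>y. r * m2 y)"
proof
  fix y show "cm E0 (\<lambda>_. r) y = r * m2 y"
    using m2_eq[OF _ E0, of y] m2_out[of y] unfolding cm_def by (simp add: sum_distrib_left[symmetric])
qed

lemma m2_Vsp: "m2 \<in> Vsp B"
  using cm_Vsp[OF E0fin, of "\<lambda>_. 1"] unfolding cm_E0 by simp

lemma cm_scale: "cm S (\<lambda>x. r * c x) = (\<lambda>y. r * cm S c y)"
  unfolding cm_def by (auto simp: sum_distrib_left mult.assoc)

lemma eff_scale: "eff A S (\<lambda>x. r * c x) = (\<lambda>\<beta>. r * eff A S c \<beta>)"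
  unfolding eff_def by (auto simp: sum_distrib_left mult.assoc)

definition comb :: "'x set \<Rightarrow> ('x \<Rightarrow> real) \<Rightarrow> 'x set \<Rightarrow> ('x \<Rightarrow> real) \<Rightarrow> 'x \<Rightarrow> real" where
  "comb S c S' c' x = (if x\<in>S then c x else 0) + (if x\<in>S' then c' x else 0)"

lemma sum_comb:
  assumes "finite S" "finite S'"
  shows "(\<Sum>x\<in>S\<union>S'. comb S c S' c' x * g x) = (\<Sum>x\<in>S. c x * g x) + (\<Sum>x\<in>S'. c' x * g x)"
  using sum_restrict_gen[of "S\<union>S'" S c g] sum_restrict_gen[of "S\<union>S'" S' c' g] assms
  unfolding comb_def by (simp add: distrib_right sum.distrib)

lemma cm_add: "finite S \<Longrightarrow> finite S' \<Longrightarrow> cm (S\<union>S') (comb S c S' c') = (\<lambda>y. cm S c y + cm S' c' y)"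
  unfolding cm_def by (auto simp: sum_comb)

lemma eff_add: "finite S \<Longrightarrow> finite S' \<Longrightarrow> eff A (S\<union>S') (comb S c S' c') = (\<lambda>\<beta>. eff A S c \<beta> + eff A S' c' \<beta>)"
  unfolding eff_def by (auto simp: sum_comb)

lemma EposI: "finite S \<Longrightarrow> S \<subseteq> outcomes A \<Longrightarrow> \<forall>\<alpha>\<in>states A. 0 \<le> eff A S c \<alpha> \<Longrightarrow> eff A S c \<in> Epos A"
  unfolding Epos_def Esp_def by blast

lemma EposE:
  assumes "a \<in> Epos A"
  obtains S c where "finite S" "S \<subseteq> outcomes A" "a = eff A S c" "\<forall>\<alpha>\<in>states A. 0 \<le> eff A S c \<alpha>"
  using assms unfolding Epos_def Esp_def by blast

end


context setting begin

lemma eff_empty_Epos: "eff A {} c \<in> Epos A"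
  by (rule EposI) (auto simp: eff_def)

lemma cm_empty: "cm {} c = (\<lambda>_. 0)" unfolding cm_def by auto

lemma eff_E0_one: "\<alpha> \<in> states A \<Longrightarrow> eff A E0 (\<lambda>_. 1) \<alpha> = 1"
  using states_Vsp[of \<alpha> A] mA E0 unfolding eff_def is_model_def prob_weight_def by auto

lemma eff_E0_Epos: "0 \<le> r \<Longrightarrow> eff A E0 (\<lambda>_. r) \<in> Epos A"
proof (rule EposI[OF E0fin])
  assume r: "0 \<le> r"
  have "eff A E0 (\<lambda>_. r) = (\<lambda>\<beta>. r * eff A E0 (\<lambda>_. 1) \<beta>)" using eff_scale[of E0 r "\<lambda>_. 1"] by simp
  then show "\<forall>\<alpha>\<in>states A. 0 \<le> eff A E0 (\<lambda>_. r) \<alpha>" using eff_E0_one r by simp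
qed

lemma m2_img: "m2 \<in> cond_map A B p \<omega> ` Epos A"
proof -
  have "cond_map A B p \<omega> (eff A E0 (\<lambda>_. 1)) = m2" using cond_map_eff[OF E0fin] cm_E0[of 1] by simp
  then show ?thesis using eff_E0_Epos[of 1] by (metis image_eqI zero_le_one)
qed

lemma img_char:
  assumes "\<beta> \<in> cond_map A B p \<omega> ` Epos A"
  obtains S c where "finite S" "S \<subseteq> outcomes A" "\<beta> = cm S c" "\<forall>\<alpha>\<in>states A. 0 \<le> eff A S c \<alpha>"
proof -
  obtain a where a: "a \<in> Epos A" "\<beta> = cond_map A B p \<omega> a" using assms by blast
  obtain S c where "finite S" "S \<subseteq> outcomes A" "a = eff A S c" "\<forall>\<alpha>\<in>states A. 0 \<le> eff A S c \<alpha>"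
    using a(1) by (rule EposE)
  then show ?thesis using that a(2) cond_map_eff by blast
qed

lemma cm_in_img:
  "finite S \<Longrightarrow> S \<subseteq> outcomes A \<Longrightarrow> \<forall>\<alpha>\<in>states A. 0 \<le> eff A S c \<alpha> \<Longrightarrow> cm S c \<in> cond_map A B p \<omega> ` Epos A"
  using cond_map_eff EposI by (metis image_eqI)

lemma cm_Vpos: "finite S \<Longrightarrow> S \<subseteq> outcomes A \<Longrightarrow> \<forall>\<alpha>\<in>states A. 0 \<le> eff A S c \<alpha> \<Longrightarrow> cm S c \<in> Vpos B"
  using Vpos_I[OF mB cm_Vsp] cm_nonneg by blast

lemma img_sub_face:
  assumes J: "is_face (Vpos B) J" "m2 \<in> J" and b: "\<beta> \<in> cond_map A B p \<omega> ` Epos A"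
  shows "\<beta> \<in> J"
proof -
  obtain S c where S: "finite S" "S \<subseteq> outcomes A" "\<beta> = cm S c" "\<forall>\<alpha>\<in>states A. 0 \<le> eff A S c \<alpha>"
    using b by (rule img_char)
  define M where "M = (\<Sum>x\<in>S. \<bar>c x\<bar>)"
  have M0: "0 \<le> M" unfolding M_def by (simp add: sum_nonneg)
  have MJ: "(\<lambda>y. M * m2 y) \<in> J" using J M0 unfolding is_face_def by blast
  define \<gamma> where "\<gamma> = (\<lambda>y. M * m2 y + (-1) * cm S c y)"
  have "\<gamma> \<in> Vsp B" unfolding \<gamma>_def Vsp_def using m2_Vsp cm_Vsp[OF S(1,2)] unfolding Vsp_def
    by (intro lin_span_lc)
  moreover have "\<forall>y\<in>outcomes B. 0 \<le> \<gamma> y" using cm_bound[OF S(1,2)] unfolding \<gamma>_def M_def by simp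
  ultimately have g: "\<gamma> \<in> Vpos B" using Vpos_I[OF mB] by blast
  have cV: "cm S c \<in> Vpos B" using cm_Vpos S by blast
  have "(\<lambda>y. cm S c y + \<gamma> y) = (\<lambda>y. M * m2 y)" unfolding \<gamma>_def by simp
  then have "(\<lambda>y. cm S c y + \<gamma> y) \<in> J" using MJ by simp
  then show ?thesis using J(1) g cV S(3) unfolding is_face_def by blast
qed

end

locale ssetting = setting +
  assumes st: "steering A B p \<omega>"
begin

lemma hered:
  assumes b1: "\<beta>1 \<in> Vpos B" and b2: "\<beta>2 \<in> Vpos B"
    and s: "(\<lambda>y. \<beta>1 y + \<beta>2 y) \<in> cond_map A B p \<omega> ` Epos A"
  shows "\<beta>1 \<in> cond_map A B p \<omega> ` Epos A"
proof -
  obtain S c where S: "finite S" "S \<subseteq> outcomes A" "(\<lambda>y. \<beta>1 y + \<beta>2 y) = cm S c" "\<forall>\<alpha>\<in>states A. 0 \<le> eff A S c \<alpha>"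
    using s by (rule img_char)
  define M where "M = 1 + (\<Sum>x\<in>S. \<bar>c x\<bar>)"
  have M0: "0 < M" unfolding M_def by (simp add: sum_nonneg add_pos_nonneg)
  have bd: "\<beta>1 y \<le> M * m2 y" for y
  proof (cases "y \<in> outcomes B")
    case True
    have "\<beta>1 y \<le> \<beta>1 y + \<beta>2 y" using Vpos_D(3)[OF mB b2] by simp
    also have "\<dots> = cm S c y" using fun_cong[OF S(3), of y] by simp
    also have "\<dots> \<le> (\<Sum>x\<in>S. \<bar>c x\<bar>) * m2 y" by (rule cm_bound[OF S(1,2)])
    also have "\<dots> \<le> M * m2 y" unfolding M_def using m2_nn[of y] by (simp add: distrib_right)
    finally show ?thesis .
  next
    case False then show ?thesis using Vpos_D(2)[OF mB b1] m2_out by simp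
  qed
  define d1 where "d1 = (\<lambda>y. (1/M) * \<beta>1 y + 0 * \<beta>1 y)"
  define d2 where "d2 = (\<lambda>y. 1 * m2 y + (-1/M) * \<beta>1 y)"
  have v1: "\<beta>1 \<in> Vsp B" using Vpos_D(1)[OF mB b1] .
  have d1V: "d1 \<in> Vpos B"
  proof (rule Vpos_I[OF mB])
    show "d1 \<in> Vsp B" unfolding d1_def using v1 unfolding Vsp_def by (intro lin_span_lc)
    show "\<forall>y\<in>outcomes B. 0 \<le> d1 y" unfolding d1_def using Vpos_D(3)[OF mB b1] M0 by simp
  qed
  have d2V: "d2 \<in> Vpos B"
  proof (rule Vpos_I[OF mB])
    show "d2 \<in> Vsp B" unfolding d2_def using v1 m2_Vsp unfolding Vsp_def by (intro lin_span_lc)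
    show "\<forall>y\<in>outcomes B. 0 \<le> d2 y"
    proof
      fix y
      have "\<beta>1 y / M \<le> m2 y" using bd[of y] M0 by (simp add: divide_le_eq mult.commute)
      then show "0 \<le> d2 y" unfolding d2_def by simp
    qed
  qed
  have b1eq: "\<beta>1 = (\<lambda>y. M * d1 y)" unfolding d1_def using M0 by auto
  show ?thesis
  proof (cases "d1 = (\<lambda>_. 0)")
    case True
    then have "\<beta>1 = cm {} (\<lambda>_. 0)" using b1eq cm_empty by simp
    then show ?thesis using cm_in_img[of "{}" "\<lambda>_. 0"] eff_empty_Epos unfolding Epos_def by auto
  next
    case n1: False
    show ?thesis
    proof (cases "d2 = (\<lambda>_. 0)")
      case True
      have "\<beta>1 y = M * m2 y" for y using fun_cong[OF True, of y] M0 unfolding d2_def by (simp add: field_simps)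
      then have "\<beta>1 = cm E0 (\<lambda>_. M)" using cm_E0[of M] by auto
      moreover have "cm E0 (\<lambda>_. M) \<in> cond_map A B p \<omega> ` Epos A"
        using cond_map_eff[OF E0fin, of "\<lambda>_. M"] eff_E0_Epos[of M] M0 by (metis image_eqI less_imp_le)
      ultimately show ?thesis by simp
    next
      case n2: False
      define \<beta> where "\<beta> = (\<lambda>i::nat. if i = 0 then d1 else d2)"
      have h1: "\<forall>i<2. \<beta> i \<in> Vpos B \<and> \<beta> i \<noteq> (\<lambda>_. 0)"
        using d1V d2V n1 n2 unfolding \<beta>_def by (auto simp: less_2_cases_iff)
      have h2: "\<forall>y. (\<Sum>i<2. \<beta> i y) = m2 y"
        unfolding \<beta>_def d1_def d2_def by (simp add: numeral_2_eq_2)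
      obtain a where a: "observable A 2 a" "\<forall>i<2. \<beta> i = cond_map A B p \<omega> (a i)"
        using st h1 h2 unfolding steering_def by blast
      have "a 0 \<in> Epos A" using a(1) unfolding observable_def is_effect_def by auto
      then obtain S' c' where S': "finite S'" "S' \<subseteq> outcomes A" "a 0 = eff A S' c'"
        "\<forall>\<alpha>\<in>states A. 0 \<le> eff A S' c' \<alpha>" by (rule EposE)
      have "d1 = cm S' c'" using a(2) S' cond_map_eff unfolding \<beta>_def by force
      then have "\<beta>1 = cm S' (\<lambda>x. M * c' x)" using b1eq cm_scale by simp
      moreover have "\<forall>\<alpha>\<in>states A. 0 \<le> eff A S' (\<lambda>x. M * c' x) \<alpha>"
        using S'(4) M0 eff_scale[of S' M c'] by simp
      ultimately show ?thesis using cm_in_img S' by blast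
    qed
  qed
qed

lemma face_img: "is_face (Vpos B) (cond_map A B p \<omega> ` Epos A)"
  unfolding is_face_def
proof (intro conjI ballI allI impI)
  show "cond_map A B p \<omega> ` Epos A \<subseteq> Vpos B"
  proof
    fix \<beta> assume "\<beta> \<in> cond_map A B p \<omega> ` Epos A"
    then obtain S c where "finite S" "S \<subseteq> outcomes A" "\<beta> = cm S c" "\<forall>\<alpha>\<in>states A. 0 \<le> eff A S c \<alpha>"
      by (rule img_char)
    then show "\<beta> \<in> Vpos B" using cm_Vpos by blast
  qed
  show "cond_map A B p \<omega> ` Epos A \<noteq> {}" using m2_img by blast
next
  fix a b assume a: "a \<in> cond_map A B p \<omega> ` Epos A" and b: "b \<in> cond_map A B p \<omega> ` Epos A"
  obtain S c where S: "finite S" "S \<subseteq> outcomes A" "a = cm S c" "\<forall>\<alpha>\<in>states A. 0 \<le> eff A S c \<alpha>"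
    using a by (rule img_char)
  obtain S' c' where S': "finite S'" "S' \<subseteq> outcomes A" "b = cm S' c'" "\<forall>\<alpha>\<in>states A. 0 \<le> eff A S' c' \<alpha>"
    using b by (rule img_char)
  have "(\<lambda>y. a y + b y) = cm (S\<union>S') (comb S c S' c')" using cm_add S S' by simp
  moreover have "\<forall>\<alpha>\<in>states A. 0 \<le> eff A (S\<union>S') (comb S c S' c') \<alpha>"
    using eff_add[OF S(1) S'(1), of c c'] S(4) S'(4) by simp
  ultimately show "(\<lambda>y. a y + b y) \<in> cond_map A B p \<omega> ` Epos A"
    using cm_in_img[of "S\<union>S'"] S S' by simp
next
  fix a and t :: real assume a: "a \<in> cond_map A B p \<omega> ` Epos A" and t: "0 \<le> t"
  obtain S c where S: "finite S" "S \<subseteq> outcomes A" "a = cm S c" "\<forall>\<alpha>\<in>states A. 0 \<le> eff A S c \<alpha>"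
    using a by (rule img_char)
  have "(\<lambda>y. t * a y) = cm S (\<lambda>x. t * c x)" using cm_scale S by simp
  moreover have "\<forall>\<alpha>\<in>states A. 0 \<le> eff A S (\<lambda>x. t * c x) \<alpha>"
    using S(4) t eff_scale[of S t c] by simp
  ultimately show "(\<lambda>y. t * a y) \<in> cond_map A B p \<omega> ` Epos A" using cm_in_img S by simp
next
  fix a b assume "a \<in> Vpos B" "b \<in> Vpos B" "(\<lambda>y. a y + b y) \<in> cond_map A B p \<omega> ` Epos A"
  then show "a \<in> cond_map A B p \<omega> ` Epos A" "b \<in> cond_map A B p \<omega> ` Epos A"
    using hered[of a b] hered[of b a] by (simp_all add: add.commute)
qed

lemma main: "cond_map A B p \<omega> ` Epos A = Face (Vpos B) m2"
proof
  show "cond_map A B p \<omega> ` Epos A \<subseteq> Face (Vpos B) m2"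
    unfolding Face_def using img_sub_face by blast
  show "Face (Vpos B) m2 \<subseteq> cond_map A B p \<omega> ` Epos A"
    unfolding Face_def using face_img m2_img by (intro Inter_lower) simp
qed

end

theorem lemma6:
  fixes A :: "'x model" and B :: "'y model" and AB :: "'w model"
    and p :: "'x \<Rightarrow> 'y \<Rightarrow> 'w" and \<omega> :: "'w \<Rightarrow> real"
  assumes "non_signaling A B AB p"
    and "\<omega> \<in> states AB"
    and "steering A B p \<omega>"
  shows "cond_map A B p \<omega> ` Epos A = Face (Vpos B) (marg2 A B p \<omega>)"
proof -
  interpret ssetting A B AB p \<omega> using assms by unfold_locales
  show ?thesis by (rule main)
qed

end
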